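(* Let $\mathbb{X}=\{T,F\}$, $n\ge1$, and for $i=1,\dots,n$ let $Bel_{\mathbb{X}_i}$ be a belief function on $\mathbb{X}_i=\mathbb{X}$. Define the belief likelihood $Bel_{\mathbb{X}_1\times\cdots\times\mathbb{X}_n}$ as the combination $Bel_{\mathbb{X}_1}^{\uparrow}\odot\cdots\odot Bel_{\mathbb{X}_n}^{\uparrow}$ of the vacuous extensions to $\mathbb{X}_1\times\cdots\times\mathbb{X}_n$, where $\odot$ is either Dempster's rule $\oplus$ or the conjunctive rule. Then for every tuple $(x_1,\dots,x_n)$ with $x_i\in\mathbb{X}_i$, \[ Bel_{\mathbb{X}_1\times\cdots\times\mathbb{X}_n}(\{(x_1,\dots,x_n)\})=\prod_{i=1}^n Bel_{\mathbb{X}_i}(\{x_i\}). \]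
   Context: A mass function on a finite set $\Theta$ is $m:2^\Theta\to[0,1]$ with $\sum_A m(A)=1$ (for Dempster's rule also $m(\emptyset)=0$); belief function $Bel(A)=\sum_{B\subseteq A}m(B)$ (for unnormalised masses the sum is over non-empty $B\subseteq A$). With $m_\cap(A)=\sum_{B\cap C=A}m_1(B)m_2(C)$, Dempster's rule gives $m_\oplus(A)=m_\cap(A)/(1-m_\cap(\emptyset))$ for $A\neq\emptyset$, and the conjunctive rule gives $m(A)=m_\cap(A)$ for all $A$ including $\emptyset$. The vacuous extension of a belief function on $\mathbb{X}_i$ with mass $m_i$ to $\mathbb{X}_1\times\cdots\times\mathbb{X}_n$ assigns mass $m_i(B)$ to $\mathbb{X}_1\times\cdots\times\mathbb{X}_{i-1}\times B\times\mathbb{X}_{i+1}\times\cdots\times\mathbb{X}_n$ and $0$ elsewhere. (In the paper each $Bel_{\mathbb{X}_i}$ depends on a parameter $\theta$, which is held fixed.) *)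

theory Defs
  imports Complex_Main
begin

text \<open>Mass function on a finite frame Theta (possibly unnormalised: m {} may be > 0).\<close>
definition mass_fun :: "'a set \<Rightarrow> ('a set \<Rightarrow> real) \<Rightarrow> bool" where
  "mass_fun Theta m \<longleftrightarrow> (\<forall>A. 0 \<le> m A) \<and> (\<forall>A. \<not> A \<subseteq> Theta \<longrightarrow> m A = 0)
     \<and> sum m (Pow Theta) = 1"

text \<open>Belief function: sum over non-empty focal subsets (coincides with the usual
  definition when m {} = 0).\<close>
definition bel :: "('a set \<Rightarrow> real) \<Rightarrow> 'a set \<Rightarrow> real" where
  "bel m A = sum m {B. B \<subseteq> A \<and> B \<noteq> {}}"

definition conj_rule :: "'a set \<Rightarrow> ('a set \<Rightarrow> real) \<Rightarrow> ('a set \<Rightarrow> real) \<Rightarrow> 'a set \<Rightarrow> real" where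
  "conj_rule Theta m1 m2 A =
     (\<Sum>(B, C) \<in> {(B, C). B \<subseteq> Theta \<and> C \<subseteq> Theta \<and> B \<inter> C = A}. m1 B * m2 C)"

definition dempster_rule :: "'a set \<Rightarrow> ('a set \<Rightarrow> real) \<Rightarrow> ('a set \<Rightarrow> real) \<Rightarrow> 'a set \<Rightarrow> real" where
  "dempster_rule Theta m1 m2 A =
     (if A = {} then 0 else conj_rule Theta m1 m2 A / (1 - conj_rule Theta m1 m2 {}))"

fun combine_list :: "(('a set \<Rightarrow> real) \<Rightarrow> ('a set \<Rightarrow> real) \<Rightarrow> ('a set \<Rightarrow> real))
      \<Rightarrow> ('a set \<Rightarrow> real) list \<Rightarrow> ('a set \<Rightarrow> real)" where
  "combine_list r [] = (\<lambda>A. 0)"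
| "combine_list r [m] = m"
| "combine_list r (m1 # m2 # ms) = combine_list r (r m1 m2 # ms)"

text \<open>Product frame X_1 x ... x X_n with X_i = {T,F} = bool; tuples are lists of length n
  (component i is xs ! i, i < n).\<close>
definition prod_frame :: "nat \<Rightarrow> bool list set" where
  "prod_frame n = {xs. length xs = n}"

definition cyl :: "nat \<Rightarrow> nat \<Rightarrow> bool set \<Rightarrow> bool list set" where
  "cyl n i B = {xs. length xs = n \<and> xs ! i \<in> B}"

definition vac_ext :: "nat \<Rightarrow> nat \<Rightarrow> (bool set \<Rightarrow> real) \<Rightarrow> bool list set \<Rightarrow> real" where
  "vac_ext n i m A = sum m {B. cyl n i B = A}"


definition bel_lik :: "((bool list set \<Rightarrow> real) \<Rightarrow> (bool list set \<Rightarrow> real) \<Rightarrow> (bool list set \<Rightarrow> real))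
      \<Rightarrow> nat \<Rightarrow> (nat \<Rightarrow> bool set \<Rightarrow> real) \<Rightarrow> bool list set \<Rightarrow> real" where
  "bel_lik r n ms = combine_list r (map (\<lambda>i. vac_ext n i (ms i)) [0..<n])"

end

theory Submission imports Defs begin

lemma combine_snoc: "xs \<noteq> [] \<Longrightarrow> combine_list r (xs @ [x]) = r (combine_list r xs) x"
  by (induction r xs rule: combine_list.induct) auto

definition rect :: "nat \<Rightarrow> nat \<Rightarrow> (nat \<Rightarrow> bool set) \<Rightarrow> bool list set" where
  "rect n k Bs = {ys. length ys = n \<and> (\<forall>i<k. ys ! i \<in> Bs i)}"

lemma cyl_inj: "k < n \<Longrightarrow> cyl n k B = cyl n k D \<Longrightarrow> B = D"
proof -
  assume k: "k < n" and e: "cyl n k B = cyl n k D"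
  have "b \<in> B \<longleftrightarrow> b \<in> D" for b
  proof -
    have "b \<in> B \<longleftrightarrow> replicate n b \<in> cyl n k B" using k by (simp add: cyl_def)
    also have "\<dots> \<longleftrightarrow> replicate n b \<in> cyl n k D" using e by simp
    also have "\<dots> \<longleftrightarrow> b \<in> D" using k by (simp add: cyl_def)
    finally show ?thesis .
  qed
  then show ?thesis by blast
qed

lemma vac_ext_cyl: "k < n \<Longrightarrow> vac_ext n k m (cyl n k D) = m D"
proof -
  assume k: "k < n"
  have "{B. cyl n k B = cyl n k D} = {D}" using cyl_inj[OF k] by blast
  then show ?thesis by (simp add: vac_ext_def)
qed

lemma vac_ext_nz: "vac_ext n k m C \<noteq> 0 \<Longrightarrow> \<exists>D. C = cyl n k D \<and> m D \<noteq> 0"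
  unfolding vac_ext_def using sum.neutral by (metis (mono_tags, lifting) mem_Collect_eq)

lemma rect_1: "rect n (Suc 0) Bs = cyl n 0 (Bs 0)"
  by (auto simp: rect_def cyl_def)

lemma rect_cyl: "rect n k Bs \<inter> cyl n k D = rect n (Suc k) (Bs(k:=D))"
  by (auto simp: rect_def cyl_def less_Suc_eq)

lemma rect_cong: "(\<And>i. i < k \<Longrightarrow> Bs i = Cs i) \<Longrightarrow> rect n k Bs = rect n k Cs"
  by (auto simp: rect_def)

lemma finite_frame: "finite (prod_frame n)"
  unfolding prod_frame_def using finite_lists_length_eq[of "UNIV::bool set" n] by simp

lemma conj_nz:
  assumes "conj_rule \<Theta> m1 m2 A \<noteq> 0" "finite \<Theta>"
  shows "\<exists>B C. B \<inter> C = A \<and> m1 B \<noteq> 0 \<and> m2 C \<noteq> 0"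
proof (rule ccontr)
  assume "\<not> ?thesis"
  then have "\<forall>p \<in> {(B, C). B \<subseteq> \<Theta> \<and> C \<subseteq> \<Theta> \<and> B \<inter> C = A}. (case p of (B, C) \<Rightarrow> m1 B * m2 C) = 0"
    by auto
  then have "conj_rule \<Theta> m1 m2 A = 0" unfolding conj_rule_def by (rule sum.neutral)
  with assms show False by simp
qed

definition MM :: "_ \<Rightarrow> nat \<Rightarrow> (nat \<Rightarrow> bool set \<Rightarrow> real) \<Rightarrow> nat \<Rightarrow> bool list set \<Rightarrow> real" where
  "MM r n ms k = combine_list r (map (\<lambda>i. vac_ext n i (ms i)) [0..<k])"

lemma MM_1: "MM r n ms (Suc 0) = vac_ext n 0 (ms 0)"
  by (simp add: MM_def)

lemma MM_Suc: "k \<ge> 1 \<Longrightarrow> MM r n ms (Suc k) = r (MM r n ms k) (vac_ext n k (ms k))"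
  by (simp add: MM_def combine_snoc)

lemma supp:
  assumes "1 \<le> k" "k \<le> n" "MM (conj_rule (prod_frame n)) n ms k B \<noteq> 0"
  shows "\<exists>Bs. B = rect n k Bs \<and> (\<forall>i<k. ms i (Bs i) \<noteq> 0)"
  using assms
proof (induction k arbitrary: B)
  case 0 then show ?case by simp
next
  case (Suc k)
  show ?case
  proof (cases "k = 0")
    case True
    with Suc.prems have "vac_ext n 0 (ms 0) B \<noteq> 0" by (simp add: MM_1)
    then obtain D where "B = cyl n 0 D" "ms 0 D \<noteq> 0" using vac_ext_nz by blast
    then show ?thesis using True by (intro exI[of _ "\<lambda>_. D"]) (simp add: rect_1)
  next
    case False
    with Suc.prems have "conj_rule (prod_frame n) (MM (conj_rule (prod_frame n)) n ms k) (vac_ext n k (ms k)) B \<noteq> 0"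
      by (simp add: MM_Suc)
    then have "\<exists>B1 C. B1 \<inter> C = B \<and> MM (conj_rule (prod_frame n)) n ms k B1 \<noteq> 0 \<and> vac_ext n k (ms k) C \<noteq> 0"
      by (rule conj_nz[OF _ finite_frame])
    then obtain B1 C where bc: "B1 \<inter> C = B" "MM (conj_rule (prod_frame n)) n ms k B1 \<noteq> 0" "vac_ext n k (ms k) C \<noteq> 0"
      by blast
    have "1 \<le> k" "k \<le> n" using False Suc.prems by auto
    from Suc.IH[OF this bc(2)] obtain Bs where
      bs: "B1 = rect n k Bs" "\<forall>i<k. ms i (Bs i) \<noteq> 0" by blast
    from vac_ext_nz[OF bc(3)] obtain D where d: "C = cyl n k D" "ms k D \<noteq> 0" by blast
    have "B = rect n (Suc k) (Bs(k:=D))" using bc(1) bs d rect_cyl by simp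
    moreover have "\<forall>i<Suc k. ms i ((Bs(k:=D)) i) \<noteq> 0" using bs d by (auto simp: less_Suc_eq)
    ultimately show ?thesis by blast
  qed
qed

lemma rect_single:
  assumes "length xs = n" "rect n k Bs = rect n k (\<lambda>i. {xs ! i})" "i < k" "k \<le> n"
  shows "Bs i = {xs ! i}"
proof -
  have "xs \<in> rect n k (\<lambda>i. {xs ! i})" using assms by (simp add: rect_def)
  then have x: "xs \<in> rect n k Bs" using assms by simp
  then have h1: "xs ! i \<in> Bs i" using assms by (simp add: rect_def)
  have h2: "b = xs ! i" if "b \<in> Bs i" for b
  proof -
    have "xs[i:=b] \<in> rect n k Bs" using x that assms(1,3,4) by (auto simp: rect_def nth_list_update)
    then have "xs[i:=b] \<in> rect n k (\<lambda>i. {xs ! i})" using assms by simp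
    then have "xs[i:=b] ! i = xs ! i" using assms(3) unfolding rect_def by blast
    then show ?thesis using assms by simp
  qed
  show ?thesis
  proof (rule set_eqI)
    fix b
    show "b \<in> Bs i \<longleftrightarrow> b \<in> {xs ! i}"
    proof
      assume "b \<in> Bs i"
      then have "b = xs ! i" by (rule h2)
      then show "b \<in> {xs ! i}" by simp
    next
      assume "b \<in> {xs ! i}"
      then have "b = xs ! i" by simp
      then show "b \<in> Bs i" using h1 by simp
    qed
  qed
qed

lemma sum_single_nz:
  assumes "finite P" "a \<in> P" "\<And>x. x \<in> P \<Longrightarrow> f x \<noteq> 0 \<Longrightarrow> x = a"
  shows "sum f P = f a"
proof -
  have "sum f P = f a + sum f (P - {a})" using assms(1,2) by (rule sum.remove)
  moreover have "sum f (P - {a}) = 0" using assms(3) by (intro sum.neutral) blast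
  ultimately show ?thesis by simp
qed

lemma rect_sub: "rect n k Bs \<subseteq> prod_frame n"
  by (auto simp: rect_def prod_frame_def)

lemma cyl_sub: "cyl n k D \<subseteq> prod_frame n"
  by (auto simp: cyl_def prod_frame_def)

lemma singleton_lemma:
  assumes "1 \<le> k" "k \<le> n" "length xs = n"
  shows "MM (conj_rule (prod_frame n)) n ms k (rect n k (\<lambda>i. {xs ! i})) = (\<Prod>i<k. ms i {xs ! i})"
  using assms
proof (induction k)
  case 0 then show ?case by simp
next
  case (Suc k)
  show ?case
  proof (cases "k = 0")
    case True
    then show ?thesis using Suc.prems by (simp add: MM_1 rect_1 vac_ext_cyl)
  next
    case False
    let ?T = "prod_frame n"
    let ?M = "MM (conj_rule ?T) n ms k"
    let ?v = "vac_ext n k (ms k)"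
    let ?S = "\<lambda>k. rect n k (\<lambda>i. {xs ! i})"
    let ?P = "{(B, C). B \<subseteq> ?T \<and> C \<subseteq> ?T \<and> B \<inter> C = ?S (Suc k)}"
    let ?f = "\<lambda>(B, C). ?M B * ?v C"
    let ?a = "(?S k, cyl n k {xs ! k})"
    have k: "1 \<le> k" "k \<le> n" "k < n" using False Suc.prems by auto
    have fin: "finite ?P"
      by (rule finite_subset[of _ "Pow ?T \<times> Pow ?T"]) (auto simp: finite_frame)
    have Sk: "?S k \<inter> cyl n k {xs ! k} = ?S (Suc k)"
      unfolding rect_cyl by (rule rect_cong) (auto simp: less_Suc_eq)
    have aP: "?a \<in> ?P" using Sk rect_sub cyl_sub by blast
    have uniq: "x = ?a" if "x \<in> ?P" "?f x \<noteq> 0" for x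
    proof -
      obtain B C where x: "x = (B, C)" by (cases x)
      have bc: "B \<inter> C = ?S (Suc k)" "?M B \<noteq> 0" "?v C \<noteq> 0" using that x by auto
      obtain Bs where bs: "B = rect n k Bs" using supp[OF k(1,2) bc(2)] by blast
      obtain D where d: "C = cyl n k D" using vac_ext_nz[OF bc(3)] by blast
      have eq: "rect n (Suc k) (Bs(k:=D)) = ?S (Suc k)" using bc(1) bs d rect_cyl by simp
      have ii: "(Bs(k:=D)) i = {xs ! i}" if "i < Suc k" for i
        by (rule rect_single[OF Suc.prems(3) eq that]) (use Suc.prems in auto)
      have dd: "D = {xs ! k}" using ii[of k] by simp
      have bi: "Bs i = {xs ! i}" if "i < k" for i using ii[of i] that by simp
      have "B = ?S k" unfolding bs by (rule rect_cong) (rule bi)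
      then show ?thesis using x d dd by simp
    qed
    have "MM (conj_rule ?T) n ms (Suc k) (?S (Suc k)) = conj_rule ?T ?M ?v (?S (Suc k))"
      using k by (simp add: MM_Suc)
    also have "\<dots> = sum ?f ?P" by (simp add: conj_rule_def)
    also have "\<dots> = ?f ?a" by (rule sum_single_nz[OF fin aP uniq])
    also have "\<dots> = (\<Prod>i<k. ms i {xs ! i}) * ms k {xs ! k}"
      using Suc.IH[OF k(1,2) Suc.prems(3)] vac_ext_cyl[OF k(3)] by simp
    finally show ?thesis by simp
  qed
qed

lemma dempster_eq:
  assumes "1 \<le> k" "k \<le> n" "\<forall>i<n. ms i {} = 0"
  shows "MM (dempster_rule (prod_frame n)) n ms k = MM (conj_rule (prod_frame n)) n ms k"
  using assms
proof (induction k)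
  case 0 then show ?case by simp
next
  case (Suc k)
  show ?case
  proof (cases "k = 0")
    case True
    then show ?thesis by (simp add: MM_1)
  next
    case False
    let ?T = "prod_frame n"
    let ?M = "MM (conj_rule ?T) n ms k"
    let ?v = "vac_ext n k (ms k)"
    have k: "1 \<le> k" "k \<le> n" "k < n" using False Suc.prems by auto
    have z: "conj_rule ?T ?M ?v {} = 0"
    proof (rule ccontr)
      assume "conj_rule ?T ?M ?v {} \<noteq> 0"
      then have "\<exists>B C. B \<inter> C = {} \<and> ?M B \<noteq> 0 \<and> ?v C \<noteq> 0"
        by (rule conj_nz[OF _ finite_frame])
      then obtain B C where bc: "B \<inter> C = {}" "?M B \<noteq> 0" "?v C \<noteq> 0" by blast
      obtain Bs where bs: "B = rect n k Bs" "\<forall>i<k. ms i (Bs i) \<noteq> 0" using supp[OF k(1,2) bc(2)] by blast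
      obtain D where d: "C = cyl n k D" "ms k D \<noteq> 0" using vac_ext_nz[OF bc(3)] by blast
      let ?Cs = "Bs(k:=D)"
      have ne: "?Cs i \<noteq> {}" if "i < Suc k" for i
        using that bs(2) d(2) Suc.prems(3) k(3) by (cases "i = k") (auto simp: less_Suc_eq)
      let ?w = "map (\<lambda>j. if j < Suc k then (SOME b. b \<in> ?Cs j) else True) [0..<n]"
      have sm: "(SOME b. b \<in> ?Cs i) \<in> ?Cs i" if "i < Suc k" for i
        using ne[OF that] by (subst some_in_eq)
      have "?w \<in> rect n (Suc k) ?Cs"
        unfolding rect_def using sm k(3) by simp
      then show False using bc(1) bs d rect_cyl by auto
    qed
    have "MM (dempster_rule ?T) n ms (Suc k) = dempster_rule ?T (MM (dempster_rule ?T) n ms k) ?v"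
      using k by (simp add: MM_Suc)
    also have "\<dots> = dempster_rule ?T ?M ?v" using Suc.IH k Suc.prems by simp
    also have "\<dots> = conj_rule ?T ?M ?v"
      using z by (auto simp: dempster_rule_def fun_eq_iff)
    also have "\<dots> = MM (conj_rule ?T) n ms (Suc k)" using k by (simp add: MM_Suc)
    finally show ?thesis .
  qed
qed

lemma bel_single: "bel m {x} = m {x}"
proof -
  have "{B. B \<subseteq> {x} \<and> B \<noteq> {}} = {{x}}" by auto
  then show ?thesis by (simp add: bel_def)
qed

lemma rect_full: "length xs = n \<Longrightarrow> rect n n (\<lambda>i. {xs ! i}) = {xs}"
  by (auto simp: rect_def intro: nth_equalityI)

lemma bel_lik_MM: "bel_lik r n ms = MM r n ms n"
  by (simp add: bel_lik_def MM_def)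

theorem theorem1:
  fixes n :: nat and ms :: "nat \<Rightarrow> bool set \<Rightarrow> real"
  assumes "n \<ge> 1"
    and "\<forall>i<n. mass_fun (UNIV :: bool set) (ms i)"
  shows "(\<forall>xs. length xs = n \<longrightarrow>
            bel (bel_lik (conj_rule (prod_frame n)) n ms) {xs} = (\<Prod>i<n. bel (ms i) {xs ! i}))
       \<and> ((\<forall>i<n. ms i {} = 0) \<longrightarrow>
          (\<forall>xs. length xs = n \<longrightarrow>
            bel (bel_lik (dempster_rule (prod_frame n)) n ms) {xs} = (\<Prod>i<n. bel (ms i) {xs ! i})))"
proof -
  have c: "bel (bel_lik (conj_rule (prod_frame n)) n ms) {xs} = (\<Prod>i<n. bel (ms i) {xs ! i})"
    if "length xs = n" for xs
    using singleton_lemma[of n n xs ms, OF assms(1) order_refl that] rect_full[OF that]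
    by (simp add: bel_single bel_lik_MM)
  moreover have "bel (bel_lik (dempster_rule (prod_frame n)) n ms) {xs} = (\<Prod>i<n. bel (ms i) {xs ! i})"
    if "length xs = n" "\<forall>i<n. ms i {} = 0" for xs
    using c[OF that(1)] dempster_eq[of n n ms, OF assms(1) order_refl that(2)]
    by (simp add: bel_lik_MM)
  ultimately show ?thesis by blast
qed

end
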